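(* Let $d\ge 3$ and let $A$ be a $d$-dimensional $(0,1)$-matrix of order $4$ equivalent to $\mathcal{M}_4^d$, with (unique) block-permutation parameters $(\mathcal{E},\lambda,s)$, $\mathcal{E}=(\varepsilon_1,\dots,\varepsilon_d)$, where exactly $k$ of the $\varepsilon_i$ equal $2$. (1) If $0\le k<d$, then every filled subcube of $\mathcal{M}_4^d$ intersects exactly $2^{d-k-1}$ filled subcubes of $A$, and each such intersection is a $k$-dimensional submatrix of order $2$ (a set of the form $T_1\times\dots\times T_d$ with exactly $k$ of the $T_i$ of size $2$ and the others of size $1$). (2) If $k=d$ and $s=0$, then the filled subcubes of $A$ coincide with the filled subcubes of $\mathcal{M}_4^d$; if $k=d$ and $s=1$, then no filled subcube of $A$ intersects any filled subcube of $\mathcal{M}_4^d$.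
   Context: $\mathcal{M}_4^d$ has entry $1$ at $\alpha$ iff $\alpha_1+\dots+\alpha_d\equiv0\pmod 4$. Equivalence: permuting coordinate positions and/or applying a permutation of $\{0,1,2,3\}$ to a single coordinate, repeatedly. Define $p_1,p_2,p_3:\{0,1,2,3\}\to\{0,1\}$ by $p_1(0)=p_1(1)=0,\ p_1(2)=p_1(3)=1$; $p_2(0)=p_2(2)=0,\ p_2(1)=p_2(3)=1$; $p_3(0)=p_3(3)=0,\ p_3(1)=p_3(2)=1$; and $\mu_1(0)=\mu_1(2)=0,\ \mu_1(1)=\mu_1(3)=1$; $\mu_2(0)=\mu_2(1)=0,\ \mu_2(2)=\mu_2(3)=1$; $\mu_3(0)=\mu_3(2)=0,\ \mu_3(1)=\mu_3(3)=1$. $Q_s^d=\{y\in\{0,1\}^d:w(y)\equiv s\pmod 2\}$ ($w$ = Hamming weight). For $\mathcal{E}\in\{1,2,3\}^d$, $s\in\{0,1\}$, $\lambda:Q_s^d\to\{0,1\}$, the block permutation with parameters $(\mathcal{E},\lambda,s)$ is the $(0,1)$-matrix with entry $1$ at $\alpha$ iff $\bigoplus_i p_{\varepsilon_i}(\alpha_i)=s$ and $\bigoplus_i\mu_{\varepsilon_i}(\alpha_i)\oplus\lambda(p_{\varepsilon_1}(\alpha_1),\dots,p_{\varepsilon_d}(\alpha_d))=0$. Every matrix equivalent to $\mathcal{M}_4^d$ ($d\ge3$) is a block permutation for a unique parameter triple; in particular $\mathcal{M}_4^d$ has parameters $((2,\dots,2),\lambda_M,0)$ with $\lambda_M(x)=0$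 iff $w(x)\equiv0\pmod 4$. For a block permutation with parameters $(\mathcal{E},\lambda,s)$, its subcubes are $C_y=\{\alpha:p_{\varepsilon_i}(\alpha_i)=y_i\ \forall i\}$, $y\in\{0,1\}^d$, and $C_y$ is filled if $w(y)\equiv s\pmod 2$. *)

theory Defs
  imports Main
begin

text \<open>Multi-indices of a d-dimensional matrix of order 4: lists of length d with entries in {0,1,2,3}.
  A d-dimensional (0,1)-matrix of order 4 is represented by the set of indices where its entry is 1.\<close>

definition idx :: "nat \<Rightarrow> nat list set" where
  "idx d = {\<alpha>. length \<alpha> = d \<and> (\<forall>a\<in>set \<alpha>. a < 4)}"

definition M4 :: "nat \<Rightarrow> nat list set" where
  "M4 d = {\<alpha> \<in> idx d. sum_list \<alpha> mod 4 = 0}"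

inductive equiv_mat :: "nat \<Rightarrow> nat list set \<Rightarrow> nat list set \<Rightarrow> bool" for d where
  refl: "A \<subseteq> idx d \<Longrightarrow> equiv_mat d A A"
| coord: "equiv_mat d A B \<Longrightarrow> bij_betw \<sigma> {..<d} {..<d} \<Longrightarrow>
      equiv_mat d A {\<alpha> \<in> idx d. map (\<lambda>i. \<alpha> ! \<sigma> i) [0..<d] \<in> B}"
| val: "equiv_mat d A B \<Longrightarrow> i < d \<Longrightarrow> bij_betw \<pi> {..<4} {..<4} \<Longrightarrow>
      equiv_mat d A {\<alpha> \<in> idx d. \<alpha>[i := \<pi> (\<alpha> ! i)] \<in> B}"

text \<open>p_e and mu_e, with {0,1} encoded as {False, True}.\<close>

fun p :: "nat \<Rightarrow> nat \<Rightarrow> bool" where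
  "p e a = (if e = 1 then a = 2 \<or> a = 3
            else if e = 2 then a = 1 \<or> a = 3
            else a = 1 \<or> a = 2)"

fun mu :: "nat \<Rightarrow> nat \<Rightarrow> bool" where
  "mu e a = (if e = 1 then a = 1 \<or> a = 3
             else if e = 2 then a = 2 \<or> a = 3
             else a = 1 \<or> a = 3)"

definition weight :: "bool list \<Rightarrow> nat" where
  "weight y = length (filter id y)"

definition xorl :: "bool list \<Rightarrow> bool" where
  "xorl y = odd (weight y)"

definition pvec :: "nat list \<Rightarrow> nat list \<Rightarrow> bool list" where
  "pvec E \<alpha> = map (\<lambda>i. p (E ! i) (\<alpha> ! i)) [0..<length \<alpha>]"

definition muvec :: "nat list \<Rightarrow> nat list \<Rightarrow> bool list" where
  "muvec E \<alpha> = map (\<lambda>i. mu (E ! i) (\<alpha> ! i)) [0..<length \<alpha>]"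

text \<open>Block permutation with parameters (E, lambda, s).  lambda is only ever evaluated on Q_s^d.\<close>

definition block_perm :: "nat \<Rightarrow> nat list \<Rightarrow> (bool list \<Rightarrow> bool) \<Rightarrow> bool \<Rightarrow> nat list set" where
  "block_perm d E lam s = {\<alpha> \<in> idx d. xorl (pvec E \<alpha>) = s \<and> xorl (muvec E \<alpha>) = lam (pvec E \<alpha>)}"

definition subcube :: "nat \<Rightarrow> nat list \<Rightarrow> bool list \<Rightarrow> nat list set" where
  "subcube d E y = {\<alpha> \<in> idx d. pvec E \<alpha> = y}"

text \<open>y in {0,1}^d indexes a filled subcube of a block permutation with parameter s.\<close>

definition filled :: "nat \<Rightarrow> bool \<Rightarrow> bool list \<Rightarrow> bool" where
  "filled d s y \<longleftrightarrow> length y = d \<and> xorl y = s"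

definition submatrix2 :: "nat \<Rightarrow> nat \<Rightarrow> nat list set \<Rightarrow> bool" where
  "submatrix2 d k S \<longleftrightarrow> (\<exists>T :: nat \<Rightarrow> nat set.
      (\<forall>i<d. T i \<subseteq> {..<4} \<and> (card (T i) = 1 \<or> card (T i) = 2)) \<and>
      card {i. i < d \<and> card (T i) = 2} = k \<and>
      S = {\<alpha> \<in> idx d. \<forall>i<d. \<alpha> ! i \<in> T i})"

end

theory Submission
  imports Defs
begin

lemma mem_subcube:
  "\<alpha> \<in> subcube d E y \<longleftrightarrow> \<alpha> \<in> idx d \<and> length y = d \<and> (\<forall>i<d. p (E!i) (\<alpha>!i) = y!i)"
proof
  assume h: "\<alpha> \<in> subcube d E y"
  then have a: "\<alpha> \<in> idx d" and py: "pvec E \<alpha> = y" by (auto simp: subcube_def)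
  have la: "length \<alpha> = d" using a by (simp add: idx_def)
  have "length y = d" using py la by (auto simp: pvec_def)
  moreover have "\<forall>i<d. p (E!i) (\<alpha>!i) = y!i"
  proof (intro allI impI)
    fix i assume "i < d"
    then show "p (E!i) (\<alpha>!i) = y!i" using py la by (auto simp: pvec_def simp del: p.simps)
  qed
  ultimately show "\<alpha> \<in> idx d \<and> length y = d \<and> (\<forall>i<d. p (E!i) (\<alpha>!i) = y!i)" using a by blast
next
  assume h: "\<alpha> \<in> idx d \<and> length y = d \<and> (\<forall>i<d. p (E!i) (\<alpha>!i) = y!i)"
  have la: "length \<alpha> = d" using h by (simp add: idx_def)
  have "pvec E \<alpha> = y"
    unfolding pvec_def la by (rule nth_equalityI) (use h in \<open>simp_all del: p.simps\<close>)
  then show "\<alpha> \<in> subcube d E y" using h by (simp add: subcube_def)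
qed

lemma lt4: "(a::nat) < 4 \<longleftrightarrow> a = 0 \<or> a = 1 \<or> a = 2 \<or> a = 3" by auto

lemma exists_a:
  assumes "e \<in> {1,2,3}" "e = 2 \<longrightarrow> b = b'"
  shows "\<exists>a. a < 4 \<and> p 2 a = b \<and> p e a = b'"
proof -
  have "e = 1 \<or> e = 2 \<or> e = 3" using assms(1) by auto
  then have "\<exists>a\<in>{0,1,2,3::nat}. p 2 a = b \<and> p e a = b'"
    using assms(2) by (elim disjE; cases b; cases b'; simp)
  then obtain a where "a\<in>{0,1,2,3::nat}" "p 2 a = b \<and> p e a = b'" by blast
  moreover have "a < 4" using \<open>a\<in>{0,1,2,3::nat}\<close> by auto
  ultimately have "a < 4 \<and> p 2 a = b \<and> p e a = b'" by (simp del: p.simps)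
  then show ?thesis by (rule exI)
qed

lemma card_T:
  assumes "e \<in> {1,2,3}" "e = 2 \<longrightarrow> b = b'"
  shows "card {a::nat. a < 4 \<and> p 2 a = b \<and> p e a = b'} = (if e = 2 then 2 else 1)"
proof -
  have eq: "{a::nat. a < 4 \<and> p 2 a = b \<and> p e a = b'} = set (filter (\<lambda>a. p 2 a = b \<and> p e a = b') [0,1,2,3])"
    unfolding lt4 by (auto simp del: p.simps)
  have "e = 1 \<or> e = 2 \<or> e = 3" using assms(1) by auto
  then show ?thesis unfolding eq card_set using assms(2) by (elim disjE; cases b; cases b'; simp)
qed
declare p.simps[simp del]

lemma flip_xorl:
  assumes "j < length y"
  shows "xorl (y[j := \<not> y!j]) = (\<not> xorl y)"
proof -
  have y: "y = take j y @ y!j # drop (Suc j) y" using assms by (simp add: id_take_nth_drop)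
  have u: "y[j := \<not> y!j] = take j y @ (\<not> y!j) # drop (Suc j) y"
    using assms by (simp add: upd_conv_take_nth_drop)
  show ?thesis unfolding xorl_def weight_def
    by (subst u, subst (2) y, cases "y!j", auto)
qed

lemma count_lists:
  fixes F :: "nat \<Rightarrow> bool" and z :: "bool list"
  assumes "j0 < d" "\<not> F j0"
  shows "card {y'. length y' = d \<and> xorl y' = t \<and> (\<forall>i<d. F i \<longrightarrow> y'!i = z!i)}
         = 2^(card {i. i<d \<and> \<not> F i} - 1)"
proof -
  define S where "S = {y'. length y' = d \<and> (\<forall>i<d. F i \<longrightarrow> y'!i = z!i)}"
  define J where "J = {i. i<d \<and> \<not> F i}"
  define ST where "ST t = {y'\<in>S. xorl y' = t}" for t
  have bij: "bij_betw (\<lambda>y'. {i\<in>J. y'!i}) S (Pow J)"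
  proof (rule bij_betw_imageI)
    show "inj_on (\<lambda>y'. {i\<in>J. y'!i}) S"
    proof (rule inj_onI)
      fix a b assume a: "a \<in> S" and b: "b \<in> S" and e: "{i\<in>J. a!i} = {i\<in>J. b!i}"
      show "a = b"
      proof (rule nth_equalityI)
        show "length a = length b" using a b by (simp add: S_def)
        fix i assume "i < length a"
        then have i: "i < d" using a by (simp add: S_def)
        show "a!i = b!i"
        proof (cases "F i")
          case True then show ?thesis using a b i by (simp add: S_def)
        next
          case False then have "i \<in> J" using i by (simp add: J_def)
          then show ?thesis using e by blast
        qed
      qed
    qed
    show "(\<lambda>y'. {i\<in>J. y'!i}) ` S = Pow J"
    proof
      show "(\<lambda>y'. {i\<in>J. y'!i}) ` S \<subseteq> Pow J" by auto
      show "Pow J \<subseteq> (\<lambda>y'. {i\<in>J. y'!i}) ` S"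
      proof
        fix B assume B: "B \<in> Pow J"
        define y' where "y' = map (\<lambda>i. if F i then z!i else i\<in>B) [0..<d]"
        have "y' \<in> S" by (simp add: y'_def S_def)
        moreover have "{i\<in>J. y'!i} = B" using B by (auto simp: y'_def J_def)
        ultimately show "B \<in> (\<lambda>y'. {i\<in>J. y'!i}) ` S" by blast
      qed
    qed
  qed
  have finJ: "finite J" by (simp add: J_def)
  have cardS: "card S = 2 ^ card J"
    using bij_betw_same_card[OF bij] finJ by (simp add: card_Pow)
  have finS: "finite S" using bij_betw_finite[OF bij] finJ by simp
  define fl where "fl y = y[j0 := \<not> y!j0]" for y :: "bool list"
  have flS: "fl y \<in> ST (\<not> u)" if "y \<in> ST u" for y u
  proof -
    have l: "length y = d" using that by (simp add: ST_def S_def)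
    have "xorl (fl y) = (\<not> u)" using that flip_xorl[of j0 y] assms l by (simp add: fl_def ST_def)
    moreover have "fl y \<in> S" using that assms l by (auto simp: fl_def ST_def S_def nth_list_update)
    ultimately show ?thesis by (simp add: ST_def)
  qed
  have flfl: "fl (fl y) = y" if "y \<in> ST u" for y u
    using that assms by (simp add: fl_def ST_def S_def)
  have "bij_betw fl (ST t) (ST (\<not> t))"
  proof (rule bij_betw_byWitness[where f'=fl])
    show "\<forall>a\<in>ST t. fl (fl a) = a" using flfl by blast
    show "\<forall>a\<in>ST (\<not> t). fl (fl a) = a" using flfl by blast
    show "fl ` ST t \<subseteq> ST (\<not> t)" using flS by blast
    have "fl ` ST (\<not> t) \<subseteq> ST (\<not> \<not> t)" using flS by blast
    then show "fl ` ST (\<not> t) \<subseteq> ST t" by simp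
  qed
  then have eqc: "card (ST t) = card (ST (\<not> t))" by (rule bij_betw_same_card)
  have "S = ST t \<union> ST (\<not> t)" by (auto simp: ST_def)
  moreover have "ST t \<inter> ST (\<not> t) = {}" by (auto simp: ST_def)
  moreover have "finite (ST t)" "finite (ST (\<not> t))" using finS by (auto simp: ST_def)
  ultimately have "card S = card (ST t) + card (ST (\<not> t))" by (simp add: card_Un_disjoint)
  then have "2 * card (ST t) = 2 ^ card J" using eqc cardS by simp
  moreover have "card J \<ge> 1" using assms finJ by (metis (mono_tags, lifting) J_def card_0_eq empty_iff less_one linorder_not_le mem_Collect_eq)
  ultimately have "card (ST t) = 2 ^ (card J - 1)"
    by (cases "card J") auto
  moreover have "ST t = {y'. length y' = d \<and> xorl y' = t \<and> (\<forall>i<d. F i \<longrightarrow> y'!i = z!i)}"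
    by (auto simp: ST_def S_def)
  ultimately show ?thesis by (simp add: J_def)
qed

lemma inter_eq:
  assumes "length y = d" "length y' = d"
  shows "subcube d (replicate d 2) y \<inter> subcube d E y'
     = {\<alpha> \<in> idx d. \<forall>i<d. \<alpha>!i \<in> {a. a<4 \<and> p 2 a = y!i \<and> p (E!i) a = y'!i}}"
  using assms by (auto simp: mem_subcube idx_def simp del: p.simps)

lemma nonempty_iff:
  assumes "length y = d" "length y' = d" "length E = d" "set E \<subseteq> {1,2,3}"
  shows "(subcube d (replicate d 2) y \<inter> subcube d E y' \<noteq> {}) \<longleftrightarrow> (\<forall>i<d. E!i = 2 \<longrightarrow> y'!i = y!i)"
proof
  assume "subcube d (replicate d 2) y \<inter> subcube d E y' \<noteq> {}"
  then obtain \<alpha> where a1: "\<alpha> \<in> subcube d (replicate d 2) y" and a2: "\<alpha> \<in> subcube d E y'" by blast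
  show "\<forall>i<d. E!i = 2 \<longrightarrow> y'!i = y!i"
  proof (intro allI impI)
    fix i assume i: "i < d" and e: "E!i = 2"
    have "p (replicate d 2 ! i) (\<alpha>!i) = y!i" using a1 i unfolding mem_subcube by blast
    then have 1: "p 2 (\<alpha>!i) = y!i" using i by simp
    have "p (E!i) (\<alpha>!i) = y'!i" using a2 i unfolding mem_subcube by blast
    then show "y'!i = y!i" using 1 e by simp
  qed
next
  assume h: "\<forall>i<d. E!i = 2 \<longrightarrow> y'!i = y!i"
  define w where "w i = (SOME a. a < 4 \<and> p 2 a = y!i \<and> p (E!i) a = y'!i)" for i
  have w: "w i < 4 \<and> p 2 (w i) = y!i \<and> p (E!i) (w i) = y'!i" if "i < d" for i
  proof -
    have "E!i \<in> {1,2,3}" using assms(3,4) that nth_mem by blast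
    moreover have "E!i = 2 \<longrightarrow> y!i = y'!i" using h that by simp
    ultimately have ex: "\<exists>a. a < 4 \<and> p 2 a = y!i \<and> p (E!i) a = y'!i" by (rule exists_a)
    show ?thesis unfolding w_def by (rule someI_ex[OF ex])
  qed
  define \<alpha> where "\<alpha> = map w [0..<d]"
  have "\<alpha> \<in> idx d" unfolding idx_def \<alpha>_def using w by auto
  moreover have "\<forall>i<d. \<alpha>!i \<in> {a. a<4 \<and> p 2 a = y!i \<and> p (E!i) a = y'!i}"
    unfolding \<alpha>_def using w by simp
  ultimately have "\<alpha> \<in> subcube d (replicate d 2) y \<inter> subcube d E y'"
    unfolding inter_eq[OF assms(1,2)] by blast
  then show "subcube d (replicate d 2) y \<inter> subcube d E y' \<noteq> {}" by blast
qed

lemma card_split: "card {i. i<d \<and> P i} + card {i. i<d \<and> \<not> P i} = (d::nat)"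
proof -
  have "{..<d} = {i. i<d \<and> P i} \<union> {i. i<d \<and> \<not> P i}" by auto
  then have "card {..<d} = card ({i. i<d \<and> P i} \<union> {i. i<d \<and> \<not> P i})" by simp
  also have "\<dots> = card {i. i<d \<and> P i} + card {i. i<d \<and> \<not> P i}"
    by (rule card_Un_disjoint) auto
  finally show ?thesis by simp
qed

theorem mainTheorem11:
  fixes d k :: nat and E :: "nat list" and lam :: "bool list \<Rightarrow> bool" and s :: bool
    and A :: "nat list set"
  assumes "d \<ge> 3"
    and "equiv_mat d (M4 d) A"
    and "length E = d" and "set E \<subseteq> {1, 2, 3}"
    and "A = block_perm d E lam s"
    and "k = card {i. i < d \<and> E ! i = 2}"
  shows "(k < d \<longrightarrow>
           (\<forall>y. filled d False y \<longrightarrow>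
              card {y'. filled d s y' \<and> subcube d (replicate d 2) y \<inter> subcube d E y' \<noteq> {}}
                = 2 ^ (d - k - 1) \<and>
              (\<forall>y'. filled d s y' \<and> subcube d (replicate d 2) y \<inter> subcube d E y' \<noteq> {} \<longrightarrow>
                 submatrix2 d k (subcube d (replicate d 2) y \<inter> subcube d E y'))))
       \<and> (k = d \<and> \<not> s \<longrightarrow>
           {subcube d E y' | y'. filled d s y'} = {subcube d (replicate d 2) y | y. filled d False y})
       \<and> (k = d \<and> s \<longrightarrow>
           (\<forall>y y'. filled d False y \<and> filled d s y' \<longrightarrow>
              subcube d (replicate d 2) y \<inter> subcube d E y' = {}))"
proof (intro conjI impI allI)
  have Ei: "E!i \<in> {1,2,3}" if "i < d" for i using assms(3,4) that nth_mem by blast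
  have ck: "card {i. i<d \<and> \<not> E!i = 2} = d - k" using card_split[of d "\<lambda>i. E!i = 2"] assms(6) by simp
  {
    fix y assume kd: "k < d" and fy: "filled d False y"
    have ly: "length y = d" using fy by (simp add: filled_def)
    have eqset: "{y'. filled d s y' \<and> subcube d (replicate d 2) y \<inter> subcube d E y' \<noteq> {}}
        = {y'. length y' = d \<and> xorl y' = s \<and> (\<forall>i<d. E!i = 2 \<longrightarrow> y'!i = y!i)}"
    proof (rule Collect_cong)
      fix y' show "(filled d s y' \<and> subcube d (replicate d 2) y \<inter> subcube d E y' \<noteq> {})
         = (length y' = d \<and> xorl y' = s \<and> (\<forall>i<d. E!i = 2 \<longrightarrow> y'!i = y!i))"
      proof (cases "length y' = d")
        case True
        show ?thesis unfolding filled_def nonempty_iff[OF ly True assms(3,4)] using True by simp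
      next
        case False
        then show ?thesis unfolding filled_def by simp
      qed
    qed
    have "{i. i<d \<and> \<not> E!i = 2} \<noteq> {}"
    proof
      assume "{i. i<d \<and> \<not> E!i = 2} = {}"
      then have "card {i. i<d \<and> \<not> E!i = 2} = 0" by simp
      then show False using ck kd by simp
    qed
    then obtain j0 where j0: "j0 < d" "\<not> E!j0 = 2" by blast
    have "card {y'. length y' = d \<and> xorl y' = s \<and> (\<forall>i<d. E!i = 2 \<longrightarrow> y'!i = y!i)}
         = 2^(card {i. i<d \<and> \<not> E!i = 2} - 1)"
      by (rule count_lists[where F="\<lambda>i. E!i = 2", OF j0])
    then show "card {y'. filled d s y' \<and> subcube d (replicate d 2) y \<inter> subcube d E y' \<noteq> {}}
                = 2 ^ (d - k - 1)"
      unfolding eqset ck by simp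
  }
  {
    fix y y' assume kd: "k < d" and fy: "filled d False y"
      and fy': "filled d s y' \<and> subcube d (replicate d 2) y \<inter> subcube d E y' \<noteq> {}"
    have ly: "length y = d" using fy by (simp add: filled_def)
    have ly': "length y' = d" using fy' by (simp add: filled_def)
    have agree: "\<forall>i<d. E!i = 2 \<longrightarrow> y'!i = y!i" using nonempty_iff[OF ly ly' assms(3,4)] fy' by blast
    define T where "T i = {a::nat. a<4 \<and> p 2 a = y!i \<and> p (E!i) a = y'!i}" for i
    have cT: "card (T i) = (if E!i = 2 then 2 else 1)" if "i < d" for i
    proof -
      have "E!i = 2 \<longrightarrow> y!i = y'!i" using agree that by simp
      from card_T[OF Ei[OF that] this] show ?thesis unfolding T_def .
    qed
    show "submatrix2 d k (subcube d (replicate d 2) y \<inter> subcube d E y')"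
      unfolding submatrix2_def
    proof (intro exI[of _ T] conjI allI impI)
      fix i assume i: "i < d"
      show "T i \<subseteq> {..<4}" by (auto simp: T_def)
      show "card (T i) = 1 \<or> card (T i) = 2" using cT[OF i] by simp
    next
      have "{i. i < d \<and> card (T i) = 2} = {i. i < d \<and> E!i = 2}"
      proof (rule Collect_cong)
        fix i show "(i < d \<and> card (T i) = 2) = (i < d \<and> E!i = 2)" using cT[of i] by (cases "E!i = 2") auto
      qed
      then show "card {i. i < d \<and> card (T i) = 2} = k" using assms(6) by simp
    next
      show "subcube d (replicate d 2) y \<inter> subcube d E y' = {\<alpha> \<in> idx d. \<forall>i<d. \<alpha> ! i \<in> T i}"
        unfolding inter_eq[OF ly ly'] by (simp add: T_def)
    qed
  }
  have ER: "E = replicate d 2" if kd: "k = d"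
  proof -
    have cd: "card {i. i < d \<and> E ! i = 2} = d" using kd assms(6) by simp
    have all: "{i. i < d \<and> E ! i = 2} = {..<d}"
    proof (rule card_subset_eq)
      show "finite {..<d}" by simp
      show "{i. i < d \<and> E ! i = 2} \<subseteq> {..<d}" by blast
      show "card {i. i < d \<and> E ! i = 2} = card {..<d}" using cd by simp
    qed
    show ?thesis
    proof (rule nth_equalityI)
      show "length E = length (replicate d 2)" using assms(3) by simp
      fix i assume "i < length E"
      then have "i \<in> {i. i < d \<and> E ! i = 2}" using all assms(3) by simp
      then show "E ! i = replicate d 2 ! i" by simp
    qed
  qed
  {
    assume h: "k = d \<and> \<not> s"
    then have "E = replicate d 2" "s = False" using ER by auto
    then show "{subcube d E y' | y'. filled d s y'} = {subcube d (replicate d 2) y | y. filled d False y}"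
      by simp
  }
  {
    fix y y' assume h: "k = d \<and> s" and h2: "filled d False y \<and> filled d s y'"
    have E2: "E = replicate d 2" using ER h by blast
    have "y \<noteq> y'" using h h2 by (auto simp: filled_def)
    then show "subcube d (replicate d 2) y \<inter> subcube d E y' = {}"
      unfolding E2 subcube_def by blast
  }
qed

end
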